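(* Let $\alpha\ge0$ and $\beta>0$. Then $D_+^\alpha(\mathcal{C}_\beta f)=\mathcal{C}_\beta(D_+^\alpha f)$ for all $f\in\mathcal{S}_+$, where $D_+^\alpha f(t)=\frac{1}{\Gamma(\alpha+1)}t^\alpha W_+^\alpha f(t)$ for $t\ge0$.
   Context: $\mathcal{S}_+$ denotes the Schwartz class on $[0,\infty)$. For $\alpha>0$ and $f\in\mathcal{S}_+$, the Weyl fractional integral is $W_+^{-\alpha}f(t)=\frac{1}{\Gamma(\alpha)}\int_t^\infty (s-t)^{\alpha-1}f(s)\,ds$, and the Weyl fractional derivative is $W_+^{\alpha}f(t)=(-1)^n\frac{d^n}{dt^n}W_+^{-(n-\alpha)}f(t)$ with $n=[\alpha]+1$; $W_+^0$ is the identity (and $W_+^\alpha$ is applied likewise to functions for which these expressions make sense). The generalized Cesàro operator is $\mathcal{C}_\beta f(t)=\frac{\beta}{t^\beta}\int_0^t (t-s)^{\beta-1}f(s)\,ds=\beta\int_0^1(1-r)^{\beta-1}f(tr)\,dr$ for $t>0$. *)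

theory Defs
  imports "HOL-Analysis.Analysis"
begin

text \<open>Functions are complex-valued functions of a real variable; only their
values on [0,\<infinity>) matter.\<close>

definition schwartz_plus :: "(real \<Rightarrow> complex) \<Rightarrow> bool" where
  "schwartz_plus f \<longleftrightarrow>
     (\<exists>fs :: nat \<Rightarrow> real \<Rightarrow> complex.
        (\<forall>t\<ge>0. fs 0 t = f t) \<and>
        (\<forall>n. \<forall>t\<ge>0. (fs n has_vector_derivative fs (Suc n) t) (at t within {0..})) \<and>
        (\<forall>m n. \<exists>C. \<forall>t\<ge>0. norm (t ^ m *\<^sub>R fs n t) \<le> C))"

fun nth_deriv :: "nat \<Rightarrow> (real \<Rightarrow> complex) \<Rightarrow> real \<Rightarrow> complex" where
  "nth_deriv 0 g = g"
| "nth_deriv (Suc k) g = (\<lambda>t. vector_derivative (nth_deriv k g) (at t within {0..}))"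

definition weyl_int :: "real \<Rightarrow> (real \<Rightarrow> complex) \<Rightarrow> real \<Rightarrow> complex" where
  "weyl_int \<alpha> f t = (1 / Gamma \<alpha>) *\<^sub>R integral {t..} (\<lambda>s. ((s - t) powr (\<alpha> - 1)) *\<^sub>R f s)"

definition weyl_deriv :: "real \<Rightarrow> (real \<Rightarrow> complex) \<Rightarrow> real \<Rightarrow> complex" where
  "weyl_deriv \<alpha> f =
     (if \<alpha> \<in> \<nat> then (\<lambda>t. (-1) ^ nat \<lfloor>\<alpha>\<rfloor> * nth_deriv (nat \<lfloor>\<alpha>\<rfloor>) f t)
      else (let n = nat \<lfloor>\<alpha>\<rfloor> + 1 in
            (\<lambda>t. (-1) ^ n * nth_deriv n (weyl_int (real n - \<alpha>) f) t)))"

text \<open>D_+^\<alpha> f(t) = t^\<alpha> W_+^\<alpha> f(t) / \<Gamma>(\<alpha>+1), with t^0 = 1.\<close>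
definition D_plus :: "real \<Rightarrow> (real \<Rightarrow> complex) \<Rightarrow> real \<Rightarrow> complex" where
  "D_plus \<alpha> f t = ((if \<alpha> = 0 then 1 else t powr \<alpha>) / Gamma (\<alpha> + 1)) *\<^sub>R weyl_deriv \<alpha> f t"

definition cesaro :: "real \<Rightarrow> (real \<Rightarrow> complex) \<Rightarrow> real \<Rightarrow> complex" where
  "cesaro \<beta> f t = \<beta> *\<^sub>R integral {0..1} (\<lambda>r. ((1 - r) powr (\<beta> - 1)) *\<^sub>R f (t * r))"

end

theory Submission
  imports Defs
begin

lemma vd_quot_iff:
  fixes f :: "real \<Rightarrow> 'a::real_normed_vector"
  shows "(f has_vector_derivative v) (at x) \<longleftrightarrow> ((\<lambda>y. (f y - f x) /\<^sub>R (y - x)) \<longlongrightarrow> v) (at x)"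
proof -
  have eq: "norm ((f y - f x) - (y - x) *\<^sub>R v) / norm (y - x) = norm ((f y - f x) /\<^sub>R (y - x) - v)"
    if "y \<noteq> x" for y
  proof -
    have "(f y - f x) /\<^sub>R (y - x) - v = (1 / (y - x)) *\<^sub>R ((f y - f x) - (y - x) *\<^sub>R v)"
    proof -
      have "(1 / (y - x)) *\<^sub>R ((y - x) *\<^sub>R v) = v" using that by simp
      then show ?thesis by (simp add: scaleR_diff_right divide_inverse)
    qed
    then show ?thesis using that by (simp add: divide_inverse mult.commute)
  qed
  have ev: "eventually (\<lambda>y. norm ((f y - f x) - (y - x) *\<^sub>R v) / norm (y - x) = norm ((f y - f x) /\<^sub>R (y - x) - v)) (at x)"
    using eq eventually_at_filter by fastforce
  have "(f has_vector_derivative v) (at x) \<longleftrightarrow>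
     ((\<lambda>y. norm ((f y - f x) - (y - x) *\<^sub>R v) / norm (y - x)) \<longlongrightarrow> 0) (at x)"
    unfolding has_vector_derivative_def has_derivative_iff_norm
    by (simp add: bounded_linear_scaleR_left)
  also have "\<dots> \<longleftrightarrow> ((\<lambda>y. norm ((f y - f x) /\<^sub>R (y - x) - v)) \<longlongrightarrow> 0) (at x)"
    by (rule tendsto_cong[OF ev])
  also have "\<dots> \<longleftrightarrow> ((\<lambda>y. (f y - f x) /\<^sub>R (y - x)) \<longlongrightarrow> v) (at x)"
    by (simp add: tendsto_norm_zero_iff Lim_null[symmetric])
  finally show ?thesis .
qed

lemma mvt_bound:
  fixes g :: "real \<Rightarrow> 'a::real_normed_vector"
  assumes "\<And>t. t \<in> ball x d \<Longrightarrow> (g has_vector_derivative g' t) (at t)"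
    and "\<And>t. t \<in> ball x d \<Longrightarrow> norm (g' t) \<le> B"
    and "t \<in> ball x d"
  shows "norm (g t - g x) \<le> B * \<bar>t - x\<bar>"
proof -
  have "x \<in> ball x d" using assms(3) by (auto simp: dist_norm)
  have "norm (g t - g x) \<le> B * norm (t - x)"
  proof (rule differentiable_bound[where S="ball x d" and f'="\<lambda>t h. h *\<^sub>R g' t"])
    show "convex (ball x d)" by simp
    show "(g has_derivative (\<lambda>h. h *\<^sub>R g' y)) (at y within ball x d)" if "y \<in> ball x d" for y
      using assms(1)[OF that] has_derivative_at_withinI unfolding has_vector_derivative_def by blast
    show "onorm (\<lambda>h. h *\<^sub>R g' y) \<le> B" if "y \<in> ball x d" for y
    proof -
      have "onorm (\<lambda>h::real. h *\<^sub>R g' y) = onorm (\<lambda>h::real. h) * norm (g' y)"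
        by (rule onorm_scaleR_left[OF bounded_linear_ident])
      then show ?thesis using assms(2)[OF that] onorm_id[where 'a=real] by simp
    qed
  qed (use assms \<open>x \<in> ball x d\<close> in auto)
  then show ?thesis by simp
qed

lemma DUI:
  fixes g g' :: "real \<Rightarrow> real \<Rightarrow> 'b::{banach, second_countable_topology}" and B :: "real \<Rightarrow> real"
  assumes d: "d > 0"
   and int: "\<And>t. t \<in> ball x d \<Longrightarrow> integrable lborel (g t)"
   and der: "\<And>t y. t \<in> ball x d \<Longrightarrow> ((\<lambda>s. g s y) has_vector_derivative g' t y) (at t)"
   and B: "integrable lborel B" and bnd: "\<And>t y. t \<in> ball x d \<Longrightarrow> norm (g' t y) \<le> B y"
   and meas: "g' x \<in> borel_measurable lborel"
  shows "((\<lambda>t. \<integral>y. g t y \<partial>lborel) has_vector_derivative (\<integral>y. g' x y \<partial>lborel)) (at x)"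
  unfolding vd_quot_iff tendsto_at_iff_sequentially
proof (intro allI impI)
  fix X :: "nat \<Rightarrow> real"
  assume X: "\<forall>i. X i \<in> UNIV - {x}" and Xl: "X \<longlonglongrightarrow> x"
  have "eventually (\<lambda>i. dist (X i) x < d) sequentially"
    using Xl d tendsto_iff by blast
  then obtain N where N: "\<And>i. i \<ge> N \<Longrightarrow> X i \<in> ball x d"
    by (auto simp: eventually_sequentially dist_commute)
  have x: "x \<in> ball x d" using d by simp
  define q where "q i y = (g (X (i + N)) y - g x y) /\<^sub>R (X (i + N) - x)" for i y
  have lim: "(\<lambda>i. integral\<^sup>L lborel (q i)) \<longlonglongrightarrow> integral\<^sup>L lborel (g' x)"
  proof (rule integral_dominated_convergence[where w=B])
    show "g' x \<in> borel_measurable lborel" by fact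
    show "q i \<in> borel_measurable lborel" for i
      unfolding q_def using int[OF N[of "i+N"]] int[OF x] by measurable
    show "integrable lborel B" by fact
    show "AE y in lborel. (\<lambda>i. q i y) \<longlonglongrightarrow> g' x y"
    proof (rule AE_I2)
      fix y
      have "((\<lambda>s. (g s y - g x y) /\<^sub>R (s - x)) \<longlongrightarrow> g' x y) (at x)"
        using der[OF x, of y] unfolding vd_quot_iff .
      moreover have "(\<lambda>i. X (i + N)) \<longlonglongrightarrow> x" using Xl by (rule LIMSEQ_ignore_initial_segment)
      moreover have "\<forall>i. X (i + N) \<in> UNIV - {x}" using X by auto
      ultimately show "(\<lambda>i. q i y) \<longlonglongrightarrow> g' x y"
        unfolding q_def tendsto_at_iff_sequentially o_def by (auto)
    qed
    show "AE y in lborel. norm (q i y) \<le> B y" for i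
    proof (rule AE_I2)
      fix y
      have t: "X (i + N) \<in> ball x d" using N by simp
      have m: "norm (g (X (i + N)) y - g x y) \<le> B y * \<bar>X (i + N) - x\<bar>"
        by (rule mvt_bound[where g'="\<lambda>t. g' t y"]) (use der bnd t in auto)
      have ne: "X (i + N) \<noteq> x" using X by auto
      show "norm (q i y) \<le> B y"
      proof -
        have "norm (q i y) = norm (g (X (i + N)) y - g x y) / \<bar>X (i + N) - x\<bar>"
          unfolding q_def by (simp add: divide_inverse mult.commute)
        also have "\<dots> \<le> B y" using m ne
          by (simp add: pos_divide_le_eq)
        finally show ?thesis .
      qed
    qed
  qed
  have "integral\<^sup>L lborel (q i) = (integral\<^sup>L lborel (g (X (i + N))) - integral\<^sup>L lborel (g x)) /\<^sub>R (X (i + N) - x)" for i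
    unfolding q_def using int[OF N[of "i+N"]] int[OF x] by simp
  with lim have "(\<lambda>i. (integral\<^sup>L lborel (g (X (i + N))) - integral\<^sup>L lborel (g x)) /\<^sub>R (X (i + N) - x)) \<longlonglongrightarrow> integral\<^sup>L lborel (g' x)"
    by simp
  then show "((\<lambda>t. ((\<integral>y. g t y \<partial>lborel) - (\<integral>y. g x y \<partial>lborel)) /\<^sub>R (t - x)) \<circ> X) \<longlonglongrightarrow> (\<integral>y. g' x y \<partial>lborel)"
    unfolding o_def by (rule LIMSEQ_offset)
qed

lemma nth_deriv_chain:
  fixes h :: "nat \<Rightarrow> real \<Rightarrow> complex"
  assumes der: "\<And>k x. x > 0 \<Longrightarrow> (h k has_vector_derivative h (Suc k) x) (at x)"
    and eq: "\<And>x. x > 0 \<Longrightarrow> G x = h 0 x"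
  shows "x > 0 \<Longrightarrow> nth_deriv k G x = h k x"
proof (induction k arbitrary: x)
  case 0 thus ?case using eq by simp
next
  case (Suc k)
  have "(nth_deriv k G has_vector_derivative h (Suc k) x) (at x)"
    by (rule has_vector_derivative_transform_within_open[OF der[OF Suc.prems], of "{0<..}"])
       (use Suc in auto)
  moreover have "at x within {0..} = at x"
    by (rule at_within_interior) (use Suc.prems in simp)
  ultimately show ?case by (simp add: vector_derivative_at)
qed

lemma HK2L:
  fixes f :: "real \<Rightarrow> real"
  assumes "f integrable_on S" "\<And>x. x \<in> S \<Longrightarrow> 0 \<le> f x"
    and "(\<lambda>x. indicator S x * f x) \<in> borel_measurable borel"
  shows "integrable lborel (\<lambda>x. indicator S x * f x)"
proof -
  have "f absolutely_integrable_on S"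
    by (rule nonnegative_absolutely_integrable_1) (use assms in auto)
  then have "integrable lebesgue (\<lambda>x. indicator S x * f x)"
    unfolding set_integrable_def by simp
  then show ?thesis
    using integrable_completion[of "\<lambda>x. indicator S x * f x" lborel] assms(3) by simp
qed

lemma int_powr_01:
  assumes "c > -1"
  shows "integrable lborel (\<lambda>x::real. indicator {0<..1} x * x powr c)"
proof (rule HK2L)
  show "(\<lambda>x. x powr c) integrable_on {0<..1}"
    by (rule integrable_on_powr_from_0') (use assms in auto)
  show "(\<lambda>x. indicator {0<..1} x * x powr c) \<in> borel_measurable borel"
    using borel_measurable_continuous_on_indicator[of "{0<..1}" "\<lambda>x::real. x powr c"]
    by (auto intro!: continuous_intros)
qed auto

lemma int_powr_inf:
  shows "integrable lborel (\<lambda>x::real. indicator {1..} x * x powr (-2))"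
proof (rule HK2L)
  show "(\<lambda>x::real. x powr (-2)) integrable_on {1..}"
    using has_integral_powr_to_inf[of "-2" 1] by (auto simp: integrable_on_def)
  show "(\<lambda>x::real. indicator {1..} x * x powr (-2)) \<in> borel_measurable borel"
    using borel_measurable_continuous_on_indicator[of "{1..}" "\<lambda>x::real. x powr (-2)"]
    by (auto intro!: continuous_intros)
qed auto

lemma ind_meas_real:
  fixes f :: "real \<Rightarrow> real"
  assumes "A \<in> sets borel" "continuous_on A f"
  shows "(\<lambda>x. indicator A x * f x) \<in> borel_measurable borel"
  using borel_measurable_continuous_on_indicator[OF assms] by simp

lemma Wint:
  fixes \<beta> c :: real
  assumes b: "\<beta> > 0" and c: "c > -1"
  shows "integrable lborel (\<lambda>r. indicator {0<..<1} r * ((1 - r) powr (\<beta> - 1) * r powr c))"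
proof -
  have I1: "integrable lborel (\<lambda>x::real. indicator {0<..1} x * x powr c)"
    by (rule int_powr_01[OF c])
  have I2': "integrable lborel (\<lambda>x. (\<lambda>x::real. indicator {0<..1} x * x powr (\<beta> - 1)) (1 + (-1) * x))"
    by (rule lborel_integrable_real_affine[OF int_powr_01]) (use b in auto)
  have "(\<lambda>x. (\<lambda>x::real. indicator {0<..1} x * x powr (\<beta> - 1)) (1 + (-1) * x)) =
        (\<lambda>x. indicator {0..<1} x * (1 - x) powr (\<beta> - 1))"
    by (auto simp: indicator_def)
  with I2' have I2: "integrable lborel (\<lambda>x. indicator {0..<1} x * (1 - x) powr (\<beta> - 1))" by simp
  have "\<exists>K. \<forall>r\<in>{0..1/2}. (1 - r) powr (\<beta> - 1) \<le> K"
  proof -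
    have "continuous_on {0..1/2} (\<lambda>r::real. (1 - r) powr (\<beta> - 1))"
      by (intro continuous_intros) auto
    from continuous_attains_sup[OF compact_Icc _ this] show ?thesis by auto
  qed
  then obtain K1 where K1: "\<And>r. r \<in> {0..1/2} \<Longrightarrow> (1 - r) powr (\<beta> - 1) \<le> K1" by blast
  have "\<exists>K. \<forall>r\<in>{1/2..1}. r powr c \<le> K"
  proof -
    have "continuous_on {1/2..1} (\<lambda>r::real. r powr c)"
      by (intro continuous_intros) auto
    from continuous_attains_sup[OF compact_Icc _ this] show ?thesis by auto
  qed
  then obtain K2 where K2: "\<And>r. r \<in> {1/2..1} \<Longrightarrow> r powr c \<le> K2" by blast
  show ?thesis
  proof (rule Bochner_Integration.integrable_bound)
    show "integrable lborel (\<lambda>x. K1 * (indicator {0<..1} x * x powr c) + K2 * (indicator {0..<1} x * (1 - x) powr (\<beta> - 1)))"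
      using I1 I2 by auto
    show "(\<lambda>r. indicator {0<..<1} r * ((1 - r) powr (\<beta> - 1) * r powr c)) \<in> borel_measurable lborel"
      using ind_meas_real[of "{0<..<1}" "\<lambda>r. (1 - r) powr (\<beta> - 1) * r powr c"]
      by (auto intro!: continuous_intros)
    show "AE x in lborel. norm (indicator {0<..<1} x * ((1 - x) powr (\<beta> - 1) * x powr c))
       \<le> norm (K1 * (indicator {0<..1} x * x powr c) + K2 * (indicator {0..<1} x * (1 - x) powr (\<beta> - 1)))"
    proof (rule AE_I2)
      fix x :: real
      show "norm (indicator {0<..<1} x * ((1 - x) powr (\<beta> - 1) * x powr c))
       \<le> norm (K1 * (indicator {0<..1} x * x powr c) + K2 * (indicator {0..<1} x * (1 - x) powr (\<beta> - 1)))"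
      proof (cases "x \<in> {0<..<1}")
        case False
        then have "indicator {0<..<1} x = (0::real)" by simp
        then show ?thesis by simp
      next
        case True
        have p1: "0 \<le> (1 - x) powr (\<beta> - 1)" "0 \<le> x powr c" by auto
        have i: "indicator {0<..<1} x = (1::real)" "indicator {0<..1} x = (1::real)" "indicator {0..<1} x = (1::real)"
          using True by auto
        have k1: "0 \<le> K1" using K1[of 0] powr_ge_zero[of "1 - 0" "\<beta> - 1"] by simp
        have k2: "0 \<le> K2" using K2[of 1] powr_ge_zero[of 1 c] by simp
        have q1: "0 \<le> K1 * x powr c" "0 \<le> K2 * (1 - x) powr (\<beta> - 1)"
          using k1 k2 p1 by auto
        have "(1 - x) powr (\<beta> - 1) * x powr c \<le> K1 * x powr c + K2 * (1 - x) powr (\<beta> - 1)"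
        proof (cases "x \<le> 1/2")
          case True
          with \<open>x \<in> {0<..<1}\<close> have "(1 - x) powr (\<beta> - 1) \<le> K1" by (intro K1) auto
          then have a: "(1 - x) powr (\<beta> - 1) * x powr c \<le> K1 * x powr c"
            using p1 by (intro mult_right_mono) auto
          then show ?thesis using q1 by linarith
        next
          case False
          with \<open>x \<in> {0<..<1}\<close> have "x powr c \<le> K2" by (intro K2) auto
          then have a: "(1 - x) powr (\<beta> - 1) * x powr c \<le> K2 * (1 - x) powr (\<beta> - 1)"
            using p1 mult_right_mono[of "x powr c" K2 "(1 - x) powr (\<beta> - 1)"] by (simp add: mult.commute)
          then show ?thesis using q1 by linarith
        qed
        then show ?thesis using p1 q1 by (simp add: i)
      qed
    qed
  qed
qed

lemma hvd_cscale:
  fixes g :: "real \<Rightarrow> 'a::real_normed_vector"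
  shows "(g has_vector_derivative g') (at x) \<Longrightarrow> ((\<lambda>x. c *\<^sub>R g x) has_vector_derivative c *\<^sub>R g') (at x)"
  using has_vector_derivative_scaleR[OF DERIV_const, of g g' x UNIV c] by simp

definition Phi :: "real \<Rightarrow> (nat \<Rightarrow> real \<Rightarrow> complex) \<Rightarrow> real \<Rightarrow> nat \<Rightarrow> real \<Rightarrow> complex" where
  "Phi \<beta> h c k t = (\<integral>r. indicator {0<..<1} r *\<^sub>R (((1 - r) powr (\<beta> - 1) * r powr (c + real k)) *\<^sub>R h k (t * r)) \<partial>lborel)"

lemma Phi_meas:
  fixes h :: "real \<Rightarrow> complex"
  assumes cont: "continuous_on {0<..} h" and s: "s > 0"
  shows "(\<lambda>r. indicator {0<..<1} r *\<^sub>R (((1 - r) powr (\<beta> - 1) * r powr e) *\<^sub>R h (s * r))) \<in> borel_measurable lborel"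
proof -
  have "continuous_on {0<..<1} (\<lambda>r. ((1 - r) powr (\<beta> - 1) * r powr e) *\<^sub>R h (s * r))"
  proof (intro continuous_intros)
    show "continuous_on {0<..<1} (\<lambda>r. h (s * r))"
      by (rule continuous_on_compose2[OF cont]) (use s in \<open>auto intro!: continuous_intros\<close>)
  qed auto
  then have m: "(\<lambda>x. indicator {0<..<1} x *\<^sub>R (((1 - x) powr (\<beta> - 1) * x powr e) *\<^sub>R h (s * x))) \<in> borel_measurable borel"
    by (rule borel_measurable_continuous_on_indicator[rotated]) simp
  then show ?thesis by simp
qed

lemma Phi_int:
  fixes h :: "real \<Rightarrow> complex"
  assumes b: "\<beta> > 0" and e: "e > -1"
    and cont: "continuous_on {0<..} h" and M: "\<And>x. x > 0 \<Longrightarrow> norm (h x) \<le> M" and s: "s > 0"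
  shows "integrable lborel (\<lambda>r. indicator {0<..<1} r *\<^sub>R (((1 - r) powr (\<beta> - 1) * r powr e) *\<^sub>R h (s * r)))"
proof (rule Bochner_Integration.integrable_bound)
  show "integrable lborel (\<lambda>r. M * (indicator {0<..<1} r * ((1 - r) powr (\<beta> - 1) * r powr e)))"
    using Wint[OF b e] by auto
  show "(\<lambda>r. indicator {0<..<1} r *\<^sub>R (((1 - r) powr (\<beta> - 1) * r powr e) *\<^sub>R h (s * r))) \<in> borel_measurable lborel"
    by (rule Phi_meas[OF cont s])
  show "AE r in lborel. norm (indicator {0<..<1} r *\<^sub>R (((1 - r) powr (\<beta> - 1) * r powr e) *\<^sub>R h (s * r)))
       \<le> norm (M * (indicator {0<..<1} r * ((1 - r) powr (\<beta> - 1) * r powr e)))"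
  proof (rule AE_I2)
    fix r :: real
    show "norm (indicator {0<..<1} r *\<^sub>R (((1 - r) powr (\<beta> - 1) * r powr e) *\<^sub>R h (s * r)))
       \<le> norm (M * (indicator {0<..<1} r * ((1 - r) powr (\<beta> - 1) * r powr e)))"
    proof (cases "r \<in> {0<..<1}")
      case False
      then have "indicator {0<..<1} r = (0::real)" by simp
      then show ?thesis by simp
    next
      case True
      then have i: "indicator {0<..<1} r = (1::real)" by simp
      have hb: "norm (h (s * r)) \<le> M" using True s by (intro M) auto
      have w: "0 \<le> (1 - r) powr (\<beta> - 1) * r powr e" by simp
      have "norm (((1 - r) powr (\<beta> - 1) * r powr e) *\<^sub>R h (s * r)) = ((1 - r) powr (\<beta> - 1) * r powr e) * norm (h (s * r))"
        using w by simp
      also have "\<dots> \<le> ((1 - r) powr (\<beta> - 1) * r powr e) * M"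
        using hb w by (rule mult_left_mono)
      also have "\<dots> \<le> norm (M * ((1 - r) powr (\<beta> - 1) * r powr e))"
        by (simp add: mult.commute)
      finally show ?thesis by (simp add: i)
    qed
  qed
qed

lemma Phi_deriv:
  fixes h :: "nat \<Rightarrow> real \<Rightarrow> complex"
  assumes b: "\<beta> > 0" and c: "c > -1"
   and der: "\<And>k x. x > 0 \<Longrightarrow> (h k has_vector_derivative h (Suc k) x) (at x)"
   and bnd: "\<And>k. \<exists>M. \<forall>x>0. norm (h k x) \<le> M"
   and t: "t > 0"
  shows "((\<lambda>s. Phi \<beta> h c k s) has_vector_derivative Phi \<beta> h c (Suc k) t) (at t)"
proof -
  have cont: "continuous_on {0<..} (h j)" for j
    using der by (intro continuous_at_imp_continuous_on ballI has_vector_derivative_continuous) auto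
  obtain M0 where M0: "\<And>x. x > 0 \<Longrightarrow> norm (h k x) \<le> M0" using bnd by blast
  obtain M1' where M1': "\<And>x. x > 0 \<Longrightarrow> norm (h (Suc k) x) \<le> M1'" using bnd by blast
  define M1 where "M1 = max M1' 0"
  have M1: "\<And>x. x > 0 \<Longrightarrow> norm (h (Suc k) x) \<le> M1" "M1 \<ge> 0"
    using M1' unfolding M1_def by (auto intro: le_max_iff_disj[THEN iffD2])
  define W where "W r = (1 - r) powr (\<beta> - 1) * r powr (c + real k)" for r :: real
  have e: "c + real k > -1" using c by simp
  define g where "g s r = indicator {0<..<1} r *\<^sub>R (W r *\<^sub>R h k (s * r))" for s r
  define g' where "g' s r = indicator {0<..<1} r *\<^sub>R (W r *\<^sub>R (r *\<^sub>R h (Suc k) (s * r)))" for s r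
  have ball: "s > 0" if "s \<in> ball t (t/2)" for s
    using that by (auto simp: dist_real_def abs_if split: if_splits)
  have "((\<lambda>s. \<integral>r. g s r \<partial>lborel) has_vector_derivative (\<integral>r. g' t r \<partial>lborel)) (at t)"
  proof (rule DUI[where d="t/2" and B="\<lambda>r. M1 * (indicator {0<..<1} r * W r)"])
    show "t / 2 > 0" using t by simp
    show "integrable lborel (g s)" if "s \<in> ball t (t/2)" for s
      unfolding g_def W_def by (rule Phi_int[OF b e cont M0 ball[OF that]])
    show "((\<lambda>s. g s r) has_vector_derivative g' s r) (at s)" if "s \<in> ball t (t/2)" for s r
    proof (cases "r \<in> {0<..<1}")
      case False
      then show ?thesis unfolding g_def g'_def by simp
    next
      case True
      have "s * r > 0" using True ball[OF that] by simp
      have d1: "((\<lambda>s. s * r) has_vector_derivative r) (at s)"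
        using has_vector_derivative_mult_left[OF has_vector_derivative_id, of r] by simp
      have "((h k \<circ> (\<lambda>s. s * r)) has_vector_derivative (r *\<^sub>R h (Suc k) (s * r))) (at s)"
        by (rule vector_diff_chain_at[OF d1 der[OF \<open>s * r > 0\<close>]])
      then have "((\<lambda>s. h k (s * r)) has_vector_derivative (r *\<^sub>R h (Suc k) (s * r))) (at s)"
        by (simp add: o_def)
      then show ?thesis unfolding g_def g'_def using True
        by (intro hvd_cscale) simp_all
    qed
    show "integrable lborel (\<lambda>r. M1 * (indicator {0<..<1} r * W r))"
      using Wint[OF b e] unfolding W_def by auto
    show "norm (g' s r) \<le> M1 * (indicator {0<..<1} r * W r)" if "s \<in> ball t (t/2)" for s r
    proof (cases "r \<in> {0<..<1}")
      case False
      then show ?thesis unfolding g'_def by simp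
    next
      case True
      have "s * r > 0" using True ball[OF that] by simp
      have w: "0 \<le> W r" unfolding W_def by simp
      have "norm (g' s r) = W r * (r * norm (h (Suc k) (s * r)))"
        unfolding g'_def using True w by simp
      also have "\<dots> \<le> W r * (1 * M1)"
        using True M1(1)[OF \<open>s * r > 0\<close>] M1(2) w
        by (intro mult_left_mono mult_mono) auto
      finally show ?thesis using True by (simp add: mult.commute)
    qed
    show "g' t \<in> borel_measurable lborel"
    proof -
      have "continuous_on {0<..} (\<lambda>x. (x / t) *\<^sub>R h (Suc k) x)"
        using t by (intro continuous_intros cont) auto
      have eq: "g' t = (\<lambda>r. indicator {0<..<1} r *\<^sub>R (((1 - r) powr (\<beta> - 1) * r powr (c + real k)) *\<^sub>R (\<lambda>x. (x / t) *\<^sub>R h (Suc k) x) (t * r)))"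
        unfolding g'_def W_def using t by (auto simp: fun_eq_iff)
      show ?thesis unfolding eq
        by (rule Phi_meas) (use t \<open>continuous_on {0<..} (\<lambda>x. (x / t) *\<^sub>R h (Suc k) x)\<close> in auto)
    qed
  qed
  moreover have "(\<lambda>s. \<integral>r. g s r \<partial>lborel) = (\<lambda>s. Phi \<beta> h c k s)"
    unfolding g_def W_def Phi_def by simp
  moreover have "(\<integral>r. g' t r \<partial>lborel) = Phi \<beta> h c (Suc k) t"
    unfolding Phi_def g'_def W_def
  proof (rule Bochner_Integration.integral_cong[OF refl])
    fix r :: real
    show "indicator {0<..<1} r *\<^sub>R (((1 - r) powr (\<beta> - 1) * r powr (c + real k)) *\<^sub>R r *\<^sub>R h (Suc k) (t * r)) =
          indicator {0<..<1} r *\<^sub>R (((1 - r) powr (\<beta> - 1) * r powr (c + real (Suc k))) *\<^sub>R h (Suc k) (t * r))"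
    proof (cases "r \<in> {0<..<1}")
      case True
      then have "r powr (c + real (Suc k)) = r powr (c + real k) * r"
        by (simp add: powr_add add.assoc)
      then show ?thesis by simp
    qed simp
  qed
  ultimately show ?thesis by simp
qed

lemma Phi_HK:
  fixes h :: "nat \<Rightarrow> real \<Rightarrow> complex"
  assumes b: "\<beta> > 0" and e: "c + real k > -1"
    and cont: "continuous_on {0<..} (h k)" and M: "\<And>x. x > 0 \<Longrightarrow> norm (h k x) \<le> M" and s: "s > 0"
  shows "Phi \<beta> h c k s = integral {0<..<1} (\<lambda>r. ((1 - r) powr (\<beta> - 1) * r powr (c + real k)) *\<^sub>R h k (s * r))"
proof -
  have "set_integrable lborel {0<..<1} (\<lambda>r. ((1 - r) powr (\<beta> - 1) * r powr (c + real k)) *\<^sub>R h k (s * r))"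
    unfolding set_integrable_def by (rule Phi_int[OF b e cont M s])
  from set_borel_integral_eq_integral(2)[OF this] show ?thesis
    unfolding Phi_def set_lebesgue_integral_def by simp
qed

lemma schwartz_phi:
  assumes "schwartz_plus f"
  obtains \<phi> :: "nat \<Rightarrow> real \<Rightarrow> complex" where
   "\<And>x. x \<ge> 0 \<Longrightarrow> f x = \<phi> 0 x"
   "\<And>k. continuous_on UNIV (\<phi> k)"
   "\<And>k x. x > 0 \<Longrightarrow> (\<phi> k has_vector_derivative \<phi> (Suc k) x) (at x)"
   "\<And>k. \<exists>C. \<forall>x. norm (\<phi> k x) \<le> C"
   "\<And>k. \<exists>C. \<forall>x\<ge>0. x ^ 2 * norm (\<phi> k x) \<le> C"
proof -
  obtain fs :: "nat \<Rightarrow> real \<Rightarrow> complex" where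
    f0: "\<forall>t\<ge>0. fs 0 t = f t" and
    fd: "\<forall>n. \<forall>t\<ge>0. (fs n has_vector_derivative fs (Suc n) t) (at t within {0..})" and
    fb: "\<forall>m n. \<exists>C. \<forall>t\<ge>0. norm (t ^ m *\<^sub>R fs n t) \<le> C"
    using assms unfolding schwartz_plus_def by blast
  define \<phi> where "\<phi> k x = fs k (max 0 x)" for k x
  show ?thesis
  proof
    show "f x = \<phi> 0 x" if "x \<ge> 0" for x using f0 that unfolding \<phi>_def by simp
    show "continuous_on UNIV (\<phi> k)" for k
    proof -
      have "continuous_on {0..} (fs k)"
        unfolding continuous_on_eq_continuous_within
        using fd has_vector_derivative_continuous by blast
      then show ?thesis unfolding \<phi>_def
        by (rule continuous_on_compose2) (auto intro!: continuous_intros)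
    qed
    show "(\<phi> k has_vector_derivative \<phi> (Suc k) x) (at x)" if "x > 0" for k x
    proof -
      have "at x within {0..} = at x"
        by (rule at_within_interior) (use that in simp)
      moreover have "(fs k has_vector_derivative fs (Suc k) x) (at x within {0..})" using fd that by simp
      ultimately have "(fs k has_vector_derivative fs (Suc k) x) (at x)" by simp
      then have "(\<phi> k has_vector_derivative fs (Suc k) x) (at x)"
        by (rule has_vector_derivative_transform_within_open[of _ _ _ "{0<..}"])
           (use that in \<open>auto simp: \<phi>_def\<close>)
      moreover have "\<phi> (Suc k) x = fs (Suc k) x" using that by (simp add: \<phi>_def)
      ultimately show ?thesis by simp
    qed
    show "\<exists>C. \<forall>x. norm (\<phi> k x) \<le> C" for k
    proof -
      obtain C where "\<forall>t\<ge>0. norm (t ^ 0 *\<^sub>R fs k t) \<le> C" using fb by blast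
      then show ?thesis unfolding \<phi>_def by (intro exI[of _ C]) auto
    qed
    show "\<exists>C. \<forall>x\<ge>0. x ^ 2 * norm (\<phi> k x) \<le> C" for k
    proof -
      obtain C where "\<forall>t\<ge>0. norm (t ^ 2 *\<^sub>R fs k t) \<le> C" using fb by blast
      then show ?thesis unfolding \<phi>_def by (intro exI[of _ C]) auto
    qed
  qed
qed

lemma final:
  fixes h :: "nat \<Rightarrow> real \<Rightarrow> complex" and G Fw :: "real \<Rightarrow> complex"
  assumes b: "\<beta> > 0" and a: "\<alpha> > 0" and \<gamma>: "\<gamma> = real n - \<alpha>" "\<gamma> < 1"
   and der: "\<And>k x. x > 0 \<Longrightarrow> (h k has_vector_derivative h (Suc k) x) (at x)"
   and bnd: "\<And>k. \<exists>M. \<forall>x>0. norm (h k x) \<le> M"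
   and G: "\<And>s. s > 0 \<Longrightarrow> G s = \<beta> *\<^sub>R Phi \<beta> h (-\<gamma>) 0 s"
   and Fw: "\<And>x. x > 0 \<Longrightarrow> Fw x = h 0 x"
   and t: "t > 0"
  shows "(t powr \<alpha> / Gamma (\<alpha> + 1)) *\<^sub>R ((-1) ^ n * nth_deriv n G t) =
         \<beta> *\<^sub>R integral {0..1} (\<lambda>r. (1 - r) powr (\<beta> - 1) *\<^sub>R
            (((t * r) powr \<alpha> / Gamma (\<alpha> + 1)) *\<^sub>R ((-1) ^ n * nth_deriv n Fw (t * r))))"
proof -
  have c: "-\<gamma> > -1" using \<gamma> by simp
  have cont: "continuous_on {0<..} (h j)" for j
    using der by (intro continuous_at_imp_continuous_on ballI has_vector_derivative_continuous) auto
  have derH: "((\<lambda>s. \<beta> *\<^sub>R Phi \<beta> h (-\<gamma>) k s) has_vector_derivative \<beta> *\<^sub>R Phi \<beta> h (-\<gamma>) (Suc k) x) (at x)"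
    if "x > 0" for k x
    by (rule hvd_cscale, rule Phi_deriv[OF b c], rule der, assumption, rule bnd, rule that)
  have nG: "nth_deriv n G t = \<beta> *\<^sub>R Phi \<beta> h (-\<gamma>) n t"
    by (rule nth_deriv_chain[where h="\<lambda>k s. \<beta> *\<^sub>R Phi \<beta> h (-\<gamma>) k s", OF derH G t])
  have nF: "nth_deriv n Fw x = h n x" if "x > 0" for x
    by (rule nth_deriv_chain[where h=h, OF der Fw that])
  have e: "-\<gamma> + real n = \<alpha>" using \<gamma> by simp
  obtain M where M: "\<And>x. x > 0 \<Longrightarrow> norm (h n x) \<le> M" using bnd by blast
  have PH: "Phi \<beta> h (-\<gamma>) n t = integral {0<..<1} (\<lambda>r. ((1 - r) powr (\<beta> - 1) * r powr \<alpha>) *\<^sub>R h n (t * r))"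
    using Phi_HK[of \<beta> "-\<gamma>" n h M t] b cont M t e a by simp
  define K where "K = t powr \<alpha> / Gamma (\<alpha> + 1)"
  have sgn: "(-1::complex) ^ n * z = ((-1::real) ^ n) *\<^sub>R z" for z
    by (simp add: scaleR_conv_of_real)
  have "integral {0..1} (\<lambda>r. (1 - r) powr (\<beta> - 1) *\<^sub>R
            (((t * r) powr \<alpha> / Gamma (\<alpha> + 1)) *\<^sub>R ((-1) ^ n * nth_deriv n Fw (t * r))))
      = integral {0<..<1} (\<lambda>r. (1 - r) powr (\<beta> - 1) *\<^sub>R
            (((t * r) powr \<alpha> / Gamma (\<alpha> + 1)) *\<^sub>R ((-1) ^ n * nth_deriv n Fw (t * r))))"
    by (rule integral_open_interval_real)
  also have "\<dots> = integral {0<..<1} (\<lambda>r. (K * (-1) ^ n) *\<^sub>R (((1 - r) powr (\<beta> - 1) * r powr \<alpha>) *\<^sub>R h n (t * r)))"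
  proof (rule integral_cong)
    fix r :: real assume r: "r \<in> {0<..<1}"
    have tr: "t * r > 0" using r t by simp
    have "(t * r) powr \<alpha> = t powr \<alpha> * r powr \<alpha>" using r t by (simp add: powr_mult)
    then show "(1 - r) powr (\<beta> - 1) *\<^sub>R
            (((t * r) powr \<alpha> / Gamma (\<alpha> + 1)) *\<^sub>R ((-1) ^ n * nth_deriv n Fw (t * r))) =
          (K * (-1) ^ n) *\<^sub>R (((1 - r) powr (\<beta> - 1) * r powr \<alpha>) *\<^sub>R h n (t * r))"
      unfolding nF[OF tr] sgn K_def by (simp add: algebra_simps)
  qed
  also have "\<dots> = (K * (-1) ^ n) *\<^sub>R Phi \<beta> h (-\<gamma>) n t"
    unfolding PH by (rule integral_cmul)
  finally show ?thesis unfolding nG sgn K_def by (simp add: algebra_simps)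
qed

definition Psi :: "real \<Rightarrow> (nat \<Rightarrow> real \<Rightarrow> complex) \<Rightarrow> nat \<Rightarrow> real \<Rightarrow> complex" where
  "Psi \<gamma> \<phi> k x = (1 / Gamma \<gamma>) *\<^sub>R (\<integral>u. (indicator {0<..} u * u powr (\<gamma> - 1)) *\<^sub>R \<phi> k (x + u) \<partial>lborel)"

definition Edom :: "real \<Rightarrow> real \<Rightarrow> real \<Rightarrow> real \<Rightarrow> real" where
  "Edom \<gamma> C0 C2 u = C0 * (indicator {0<..1} u * u powr (\<gamma> - 1)) + C2 * (indicator {1..} u * u powr (-2))"

lemma Edom_int: "\<gamma> > 0 \<Longrightarrow> integrable lborel (Edom \<gamma> C0 C2)"
  unfolding Edom_def using int_powr_01[of "\<gamma> - 1"] int_powr_inf by auto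

lemma Edom_bound:
  fixes F :: "real \<Rightarrow> complex"
  assumes g: "0 < \<gamma>" "\<gamma> < 1" and x: "x \<ge> 0"
    and C0: "\<And>y. norm (F y) \<le> C0" and C2: "\<And>y. y \<ge> 0 \<Longrightarrow> y ^ 2 * norm (F y) \<le> C2"
  shows "norm ((indicator {0<..} u * u powr (\<gamma> - 1)) *\<^sub>R F (x + u)) \<le> Edom \<gamma> C0 C2 u"
proof -
  have c0: "C0 \<ge> 0" using C0[of 0] norm_ge_zero order_trans by blast
  have c2: "C2 \<ge> 0" using C2[of 0] by simp
  have E0: "Edom \<gamma> C0 C2 u \<ge> 0" unfolding Edom_def using c0 c2 by (intro add_nonneg_nonneg mult_nonneg_nonneg) auto
  show ?thesis
  proof (cases "u > 0")
    case False
    then have "indicator {0<..} u = (0::real)" by simp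
    then show ?thesis using E0 by simp
  next
    case True
    then have i: "indicator {0<..} u = (1::real)" by simp
    have lhs: "norm ((indicator {0<..} u * u powr (\<gamma> - 1)) *\<^sub>R F (x + u)) = u powr (\<gamma> - 1) * norm (F (x + u))"
      by (simp add: i)
    show ?thesis
    proof (cases "u \<le> 1")
      case True
      have "u powr (\<gamma> - 1) * norm (F (x + u)) \<le> u powr (\<gamma> - 1) * C0"
        by (intro mult_left_mono C0) auto
      moreover have "0 \<le> C2 * (indicator {1..} u * u powr (-2))" using c2 by simp
      moreover have "indicator {0<..1} u = (1::real)" using \<open>u > 0\<close> True by simp
      ultimately show ?thesis unfolding lhs Edom_def by (simp add: mult.commute)
    next
      case False
      then have u1: "u > 1" by simp
      have p1: "u powr (\<gamma> - 1) \<le> 1" using u1 g by (smt (verit) powr_less_one)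
      have "u ^ 2 * norm (F (x + u)) \<le> (x + u) ^ 2 * norm (F (x + u))"
        using x u1 by (intro mult_right_mono power_mono) auto
      also have "\<dots> \<le> C2" using C2[of "x + u"] x u1 by simp
      finally have "norm (F (x + u)) \<le> C2 / u ^ 2" using u1 by (simp add: field_simps)
      also have "C2 / u ^ 2 = C2 * u powr (-2)" using u1 by (simp add: powr_minus_divide powr_realpow divide_inverse)
      finally have n: "norm (F (x + u)) \<le> C2 * u powr (-2)" .
      have "u powr (\<gamma> - 1) * norm (F (x + u)) \<le> 1 * norm (F (x + u))"
        using p1 by (intro mult_right_mono) auto
      also have "\<dots> \<le> C2 * u powr (-2)" using n by simp
      finally have "u powr (\<gamma> - 1) * norm (F (x + u)) \<le> C2 * u powr (-2)" .
      moreover have "indicator {0<..1} u = (0::real)" "indicator {1..} u = (1::real)" using u1 by auto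
      ultimately show ?thesis unfolding lhs Edom_def by simp
    qed
  qed
qed

lemma Psi_meas:
  fixes F :: "real \<Rightarrow> complex"
  assumes "continuous_on UNIV F"
  shows "(\<lambda>u. (indicator {0<..} u * u powr (\<gamma> - 1)) *\<^sub>R F (x + u)) \<in> borel_measurable lborel"
proof -
  have [measurable]: "F \<in> borel_measurable borel" using assms by (rule borel_measurable_continuous_onI)
  show ?thesis by measurable
qed

lemma Psi_int:
  fixes F :: "real \<Rightarrow> complex"
  assumes g: "0 < \<gamma>" "\<gamma> < 1" and x: "x \<ge> 0" and cont: "continuous_on UNIV F"
    and C0: "\<And>y. norm (F y) \<le> C0" and C2: "\<And>y. y \<ge> 0 \<Longrightarrow> y ^ 2 * norm (F y) \<le> C2"
  shows "integrable lborel (\<lambda>u. (indicator {0<..} u * u powr (\<gamma> - 1)) *\<^sub>R F (x + u))"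
proof (rule Bochner_Integration.integrable_bound[OF Edom_int[OF g(1), of C0 C2]])
  show "(\<lambda>u. (indicator {0<..} u * u powr (\<gamma> - 1)) *\<^sub>R F (x + u)) \<in> borel_measurable lborel"
    by (rule Psi_meas[OF cont])
  show "AE u in lborel. norm ((indicator {0<..} u * u powr (\<gamma> - 1)) *\<^sub>R F (x + u)) \<le> norm (Edom \<gamma> C0 C2 u)"
    using Edom_bound[OF g x C0 C2] by (intro AE_I2) (smt (verit) real_norm_def)
qed

lemma weyl_L:
  fixes F :: "real \<Rightarrow> complex"
  assumes int: "integrable lborel (\<lambda>u. (indicator {0<..} u * u powr (a - 1)) *\<^sub>R F (x + u))"
  shows "integral {x..} (\<lambda>s. (s - x) powr (a - 1) *\<^sub>R F s) = (\<integral>u. (indicator {0<..} u * u powr (a - 1)) *\<^sub>R F (x + u) \<partial>lborel)"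
proof -
  define G where "G s = indicator {x..} s *\<^sub>R ((s - x) powr (a - 1) *\<^sub>R F s)" for s
  have eqf: "(\<lambda>u. G (x + 1 * u)) = (\<lambda>u. (indicator {0<..} u * u powr (a - 1)) *\<^sub>R F (x + u))"
  proof
    fix u :: real
    show "G (x + 1 * u) = (indicator {0<..} u * u powr (a - 1)) *\<^sub>R F (x + u)"
      unfolding G_def by (cases "u > 0"; cases "u = 0") (auto simp: indicator_def)
  qed
  have "integrable lborel G"
    using lborel_integrable_real_affine_iff[of 1 G x] int eqf by simp
  then have si: "set_integrable lborel {x..} (\<lambda>s. (s - x) powr (a - 1) *\<^sub>R F s)"
    unfolding set_integrable_def G_def .
  have "integral {x..} (\<lambda>s. (s - x) powr (a - 1) *\<^sub>R F s) = (\<integral>s. G s \<partial>lborel)"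
    using set_borel_integral_eq_integral(2)[OF si] unfolding set_lebesgue_integral_def G_def by simp
  also have "\<dots> = \<bar>1\<bar> *\<^sub>R (\<integral>u. G (x + 1 * u) \<partial>lborel)"
    by (rule lborel_integral_real_affine) simp
  finally show ?thesis unfolding eqf by simp
qed

lemma Psi_props:
  fixes \<phi> :: "nat \<Rightarrow> real \<Rightarrow> complex"
  assumes g: "0 < \<gamma>" "\<gamma> < 1"
   and f0: "\<And>x. x \<ge> 0 \<Longrightarrow> f x = \<phi> 0 x"
   and cont: "\<And>k. continuous_on UNIV (\<phi> k)"
   and der: "\<And>k x. x > 0 \<Longrightarrow> (\<phi> k has_vector_derivative \<phi> (Suc k) x) (at x)"
   and b0: "\<And>k. \<exists>C. \<forall>x. norm (\<phi> k x) \<le> C"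
   and b2: "\<And>k. \<exists>C. \<forall>x\<ge>0. x ^ 2 * norm (\<phi> k x) \<le> C"
  shows "\<And>k x. x > 0 \<Longrightarrow> (Psi \<gamma> \<phi> k has_vector_derivative Psi \<gamma> \<phi> (Suc k) x) (at x)"
    "\<And>k. \<exists>M. \<forall>x>0. norm (Psi \<gamma> \<phi> k x) \<le> M"
    "\<And>x. x > 0 \<Longrightarrow> weyl_int \<gamma> f x = Psi \<gamma> \<phi> 0 x"
proof -
  have CC: "\<exists>C0 C2. (\<forall>y. norm (\<phi> k y) \<le> C0) \<and> (\<forall>y\<ge>0. y ^ 2 * norm (\<phi> k y) \<le> C2)" for k
    using b0[of k] b2[of k] by blast
  have int: "integrable lborel (\<lambda>u. (indicator {0<..} u * u powr (\<gamma> - 1)) *\<^sub>R \<phi> k (x + u))"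
    if "x \<ge> 0" for k x
  proof -
    obtain C0 C2 where "\<And>y. norm (\<phi> k y) \<le> C0" "\<And>y. y \<ge> 0 \<Longrightarrow> y ^ 2 * norm (\<phi> k y) \<le> C2"
      using CC[of k] by blast
    then show ?thesis by (intro Psi_int[OF g that cont]) auto
  qed
  show "(Psi \<gamma> \<phi> k has_vector_derivative Psi \<gamma> \<phi> (Suc k) x) (at x)" if x: "x > 0" for k x
  proof -
    obtain C0 C2 where C0: "\<And>y. norm (\<phi> (Suc k) y) \<le> C0" and C2: "\<And>y. y \<ge> 0 \<Longrightarrow> y ^ 2 * norm (\<phi> (Suc k) y) \<le> C2"
      using CC[of "Suc k"] by blast
    have ball: "s > 0" if "s \<in> ball x (x/2)" for s
      using that by (auto simp: dist_real_def abs_if split: if_splits)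
    have "((\<lambda>s. \<integral>u. (indicator {0<..} u * u powr (\<gamma> - 1)) *\<^sub>R \<phi> k (s + u) \<partial>lborel) has_vector_derivative
           (\<integral>u. (indicator {0<..} u * u powr (\<gamma> - 1)) *\<^sub>R \<phi> (Suc k) (x + u) \<partial>lborel)) (at x)"
    proof (rule DUI[where d="x/2" and B="Edom \<gamma> C0 C2"])
      show "x / 2 > 0" using x by simp
      show "integrable lborel (\<lambda>u. (indicator {0<..} u * u powr (\<gamma> - 1)) *\<^sub>R \<phi> k (s + u))"
        if "s \<in> ball x (x/2)" for s using int ball[OF that] by simp
      show "((\<lambda>s. (indicator {0<..} u * u powr (\<gamma> - 1)) *\<^sub>R \<phi> k (s + u)) has_vector_derivative
             (indicator {0<..} u * u powr (\<gamma> - 1)) *\<^sub>R \<phi> (Suc k) (s + u)) (at s)"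
        if "s \<in> ball x (x/2)" for s u
      proof (cases "u > 0")
        case False
        then show ?thesis by simp
      next
        case True
        have "s + u > 0" using True ball[OF that] by simp
        have "((\<phi> k \<circ> (\<lambda>s. s + u)) has_vector_derivative (1 *\<^sub>R \<phi> (Suc k) (s + u))) (at s)"
        proof (rule vector_diff_chain_at[where f="\<lambda>s. s + u"])
          show "((\<lambda>s. s + u) has_vector_derivative 1) (at s)" by (auto intro!: derivative_eq_intros)
          show "(\<phi> k has_vector_derivative \<phi> (Suc k) (s + u)) (at (s + u))" by (rule der[OF \<open>s + u > 0\<close>])
        qed
        then show ?thesis by (intro hvd_cscale) (simp add: o_def)
      qed
      show "integrable lborel (Edom \<gamma> C0 C2)" by (rule Edom_int[OF g(1)])
      show "norm ((indicator {0<..} u * u powr (\<gamma> - 1)) *\<^sub>R \<phi> (Suc k) (s + u)) \<le> Edom \<gamma> C0 C2 u"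
        if "s \<in> ball x (x/2)" for s u
        using Edom_bound[OF g _ C0 C2, of s u] ball[OF that] by simp
      show "(\<lambda>u. (indicator {0<..} u * u powr (\<gamma> - 1)) *\<^sub>R \<phi> (Suc k) (x + u)) \<in> borel_measurable lborel"
        by (rule Psi_meas[OF cont])
    qed
    then show ?thesis unfolding Psi_def by (rule hvd_cscale)
  qed
  show "\<exists>M. \<forall>x>0. norm (Psi \<gamma> \<phi> k x) \<le> M" for k
  proof -
    obtain C0 C2 where C0: "\<And>y. norm (\<phi> k y) \<le> C0" and C2: "\<And>y. y \<ge> 0 \<Longrightarrow> y ^ 2 * norm (\<phi> k y) \<le> C2"
      using CC[of k] by blast
    have "norm (Psi \<gamma> \<phi> k x) \<le> \<bar>1 / Gamma \<gamma>\<bar> * (\<integral>u. Edom \<gamma> C0 C2 u \<partial>lborel)" if "x > 0" for x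
    proof -
      have "norm (\<integral>u. (indicator {0<..} u * u powr (\<gamma> - 1)) *\<^sub>R \<phi> k (x + u) \<partial>lborel) \<le> (\<integral>u. Edom \<gamma> C0 C2 u \<partial>lborel)"
        by (rule Bochner_Integration.integral_norm_bound_integral[OF int Edom_int[OF g(1)]])
           (use Edom_bound[OF g _ C0 C2] that in auto)
      then show ?thesis unfolding Psi_def by (simp add: divide_right_mono)
    qed
    then show ?thesis by blast
  qed
  show "weyl_int \<gamma> f x = Psi \<gamma> \<phi> 0 x" if x: "x > 0" for x
  proof -
    have "integral {x..} (\<lambda>s. (s - x) powr (\<gamma> - 1) *\<^sub>R f s) = integral {x..} (\<lambda>s. (s - x) powr (\<gamma> - 1) *\<^sub>R \<phi> 0 s)"
      by (rule integral_cong) (use f0 x in auto)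
    also have "\<dots> = (\<integral>u. (indicator {0<..} u * u powr (\<gamma> - 1)) *\<^sub>R \<phi> 0 (x + u) \<partial>lborel)"
      by (rule weyl_L[OF int]) (use x in simp)
    finally show ?thesis unfolding weyl_int_def Psi_def by simp
  qed
qed

lemma scale_sub:
  fixes F0 :: "real \<Rightarrow> 'b::{banach, second_countable_topology}"
  assumes r: "r > 0"
  shows "(\<integral>v. (indicator {0<..} v * v powr (\<gamma> - 1)) *\<^sub>R F0 (r * v) \<partial>lborel) =
           r powr (-\<gamma>) *\<^sub>R (\<integral>u. (indicator {0<..} u * u powr (\<gamma> - 1)) *\<^sub>R F0 u \<partial>lborel)"
    and "integrable lborel (\<lambda>u. (indicator {0<..} u * u powr (\<gamma> - 1)) *\<^sub>R F0 u) \<Longrightarrow>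
           integrable lborel (\<lambda>v. (indicator {0<..} v * v powr (\<gamma> - 1)) *\<^sub>R F0 (r * v))"
proof -
  define H where "H u = (indicator {0<..} u * u powr (\<gamma> - 1)) *\<^sub>R F0 u" for u
  have pw: "(indicator {0<..} v * v powr (\<gamma> - 1)) *\<^sub>R F0 (r * v) = r powr (1 - \<gamma>) *\<^sub>R H (0 + r * v)" for v
  proof (cases "v > 0")
    case True
    have "(r * v) powr (\<gamma> - 1) = r powr (\<gamma> - 1) * v powr (\<gamma> - 1)" using r True by (simp add: powr_mult)
    moreover have "r powr (1 - \<gamma>) * r powr (\<gamma> - 1) = 1" using r by (simp add: powr_add[symmetric])
    ultimately have "r powr (1 - \<gamma>) * (r * v) powr (\<gamma> - 1) = v powr (\<gamma> - 1)"
      by (metis mult.assoc mult_1)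
    then show ?thesis unfolding H_def using True r by simp
  next
    case False
    then have "\<not> r * v > 0" using r by (simp add: zero_less_mult_iff)
    then show ?thesis unfolding H_def using False by simp
  qed
  have "(\<integral>u. H u \<partial>lborel) = \<bar>r\<bar> *\<^sub>R (\<integral>v. H (0 + r * v) \<partial>lborel)"
    by (rule lborel_integral_real_affine) (use r in simp)
  moreover have "r powr (1 - \<gamma>) = r * r powr (-\<gamma>)"
    using r powr_add[of r 1 "-\<gamma>"] by simp
  ultimately show "(\<integral>v. (indicator {0<..} v * v powr (\<gamma> - 1)) *\<^sub>R F0 (r * v) \<partial>lborel) =
           r powr (-\<gamma>) *\<^sub>R (\<integral>u. (indicator {0<..} u * u powr (\<gamma> - 1)) *\<^sub>R F0 u \<partial>lborel)"
    unfolding pw H_def[symmetric] using r by simp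
  assume "integrable lborel (\<lambda>u. (indicator {0<..} u * u powr (\<gamma> - 1)) *\<^sub>R F0 u)"
  then have "integrable lborel (\<lambda>v. H (0 + r * v))"
    unfolding H_def[symmetric] by (rule lborel_integrable_real_affine) (use r in simp)
  then show "integrable lborel (\<lambda>v. (indicator {0<..} v * v powr (\<gamma> - 1)) *\<^sub>R F0 (r * v))"
    unfolding pw by simp
qed

lemma CES:
  fixes \<phi> :: "nat \<Rightarrow> real \<Rightarrow> complex"
  assumes b: "\<beta> > 0"
   and f0: "\<And>x. x \<ge> 0 \<Longrightarrow> f x = \<phi> 0 x"
   and cont: "continuous_on UNIV (\<phi> 0)"
   and C: "\<And>x. norm (\<phi> 0 x) \<le> C"
   and s: "s > 0"
  shows "cesaro \<beta> f s = \<beta> *\<^sub>R Phi \<beta> \<phi> 0 0 s"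
proof -
  have "Phi \<beta> \<phi> 0 0 s = integral {0<..<1} (\<lambda>r. ((1 - r) powr (\<beta> - 1) * r powr (0 + real 0)) *\<^sub>R \<phi> 0 (s * r))"
    using Phi_HK[of \<beta> 0 0 \<phi> C s] b continuous_on_subset[OF cont] C s by auto
  also have "\<dots> = integral {0<..<1} (\<lambda>r. (1 - r) powr (\<beta> - 1) *\<^sub>R f (s * r))"
    by (rule integral_cong) (use s f0 in auto)
  also have "\<dots> = integral {0..1} (\<lambda>r. (1 - r) powr (\<beta> - 1) *\<^sub>R f (s * r))"
    by (rule integral_open_interval_real[symmetric])
  finally show ?thesis unfolding cesaro_def by simp
qed


lemma W3:
  fixes \<phi> :: "nat \<Rightarrow> real \<Rightarrow> complex"
  assumes g: "0 < \<gamma>" "\<gamma> < 1" and b: "\<beta> > 0"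
   and f0: "\<And>x. x \<ge> 0 \<Longrightarrow> f x = \<phi> 0 x"
   and cont: "\<And>k. continuous_on UNIV (\<phi> k)"
   and der: "\<And>k x. x > 0 \<Longrightarrow> (\<phi> k has_vector_derivative \<phi> (Suc k) x) (at x)"
   and b0: "\<And>k. \<exists>C. \<forall>x. norm (\<phi> k x) \<le> C"
   and b2: "\<And>k. \<exists>C. \<forall>x\<ge>0. x ^ 2 * norm (\<phi> k x) \<le> C"
   and t: "t > 0"
  shows "weyl_int \<gamma> (cesaro \<beta> f) t = \<beta> *\<^sub>R Phi \<beta> (Psi \<gamma> \<phi>) (-\<gamma>) 0 t"
proof -
  obtain C0 where C0: "\<And>y. norm (\<phi> 0 y) \<le> C0" using b0 by blast
  obtain C2 where C2: "\<And>y. y \<ge> 0 \<Longrightarrow> y ^ 2 * norm (\<phi> 0 y) \<le> C2" using b2 by blast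
  have [measurable]: "\<phi> 0 \<in> borel_measurable borel" using cont by (rule borel_measurable_continuous_onI)
  define P where "P r v = (indicator {0<..<1} r * indicator {0<..} v * ((1 - r) powr (\<beta> - 1) * v powr (\<gamma> - 1))) *\<^sub>R \<phi> 0 ((t + v) * r)" for r v :: real
  have Pm: "case_prod P \<in> borel_measurable (lborel \<Otimes>\<^sub>M lborel)"
    unfolding P_def by measurable
  define A where "A = (\<integral>u. Edom \<gamma> C0 C2 u \<partial>lborel)"
  define N where "N x = (\<integral>u. (indicator {0<..} u * u powr (\<gamma> - 1)) *\<^sub>R norm (\<phi> 0 (x + u)) \<partial>lborel)" for x
  have nrm: "norm ((indicator {0<..} u * u powr (\<gamma> - 1)) *\<^sub>R \<phi> 0 (x + u)) = (indicator {0<..} u * u powr (\<gamma> - 1)) *\<^sub>R norm (\<phi> 0 (x + u))" for x u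
    by simp
  have intN: "integrable lborel (\<lambda>u. (indicator {0<..} u * u powr (\<gamma> - 1)) *\<^sub>R norm (\<phi> 0 (x + u)))" if "x \<ge> 0" for x
    using integrable_norm[OF Psi_int[OF g that cont(1) C0 C2]] unfolding nrm .
  have Nb: "N x \<le> A" "0 \<le> N x" if "x \<ge> 0" for x
  proof -
    show "N x \<le> A" unfolding N_def A_def
      by (rule integral_mono[OF intN[OF that] Edom_int[OF g(1)]])
         (use Edom_bound[OF g that C0 C2] nrm in metis)
    show "0 \<le> N x" unfolding N_def by (rule integral_nonneg_AE) auto
  qed
  have F1: "(\<integral>v. norm (P r v) \<partial>lborel) = indicator {0<..<1} r * ((1 - r) powr (\<beta> - 1) * r powr (-\<gamma>)) * N (t * r)" for r
  proof (cases "r \<in> {0<..<1}")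
    case False
    then show ?thesis unfolding P_def by simp
  next
    case True
    have "norm (P r v) = (1 - r) powr (\<beta> - 1) * ((indicator {0<..} v * v powr (\<gamma> - 1)) *\<^sub>R (\<lambda>u. norm (\<phi> 0 (t * r + u))) (r * v))" for v
      unfolding P_def using True by (simp add: algebra_simps abs_mult)
    then have "(\<integral>v. norm (P r v) \<partial>lborel) = (1 - r) powr (\<beta> - 1) * (\<integral>v. (indicator {0<..} v * v powr (\<gamma> - 1)) *\<^sub>R (\<lambda>u. norm (\<phi> 0 (t * r + u))) (r * v) \<partial>lborel)"
      by simp
    also have "\<dots> = (1 - r) powr (\<beta> - 1) * (r powr (-\<gamma>) * N (t * r))"
      using scale_sub(1)[of r \<gamma> "\<lambda>u. norm (\<phi> 0 (t * r + u))"] True by (simp add: N_def)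
    finally show ?thesis using True by simp
  qed
  have F2: "integrable lborel (\<lambda>r. \<integral>v. norm (P r v) \<partial>lborel)"
  proof (rule Bochner_Integration.integrable_bound)
    show "integrable lborel (\<lambda>r. A * (indicator {0<..<1} r * ((1 - r) powr (\<beta> - 1) * r powr (-\<gamma>))))"
      using Wint[OF b, of "-\<gamma>"] g by auto
    have "(\<lambda>(r, v). norm (P r v)) \<in> borel_measurable (lborel \<Otimes>\<^sub>M lborel)"
      using Pm by measurable
    then show "(\<lambda>r. \<integral>v. norm (P r v) \<partial>lborel) \<in> borel_measurable lborel"
      by (rule lborel.borel_measurable_lebesgue_integral)
    show "AE r in lborel. norm (\<integral>v. norm (P r v) \<partial>lborel) \<le> norm (A * (indicator {0<..<1} r * ((1 - r) powr (\<beta> - 1) * r powr (-\<gamma>))))"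
    proof (rule AE_I2)
      fix r :: real
      show "norm (\<integral>v. norm (P r v) \<partial>lborel) \<le> norm (A * (indicator {0<..<1} r * ((1 - r) powr (\<beta> - 1) * r powr (-\<gamma>))))"
      proof (cases "r \<in> {0<..<1}")
        case False
        then show ?thesis unfolding F1 by simp
      next
        case True
        have tr: "t * r \<ge> 0" using True t by simp
        have w: "0 \<le> (1 - r) powr (\<beta> - 1) * r powr (-\<gamma>)" by simp
        have "norm (\<integral>v. norm (P r v) \<partial>lborel) = ((1 - r) powr (\<beta> - 1) * r powr (-\<gamma>)) * N (t * r)"
          unfolding F1 using True Nb(2)[OF tr] w by simp
        also have "\<dots> \<le> ((1 - r) powr (\<beta> - 1) * r powr (-\<gamma>)) * A"
          by (rule mult_left_mono[OF Nb(1)[OF tr] w])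
        also have "\<dots> \<le> norm (A * (indicator {0<..<1} r * ((1 - r) powr (\<beta> - 1) * r powr (-\<gamma>))))"
          using True by (simp add: mult.commute)
        finally show ?thesis .
      qed
    qed
  qed
  have F3: "integrable lborel (\<lambda>v. P r v)" for r
  proof (cases "r \<in> {0<..<1}")
    case False
    then show ?thesis unfolding P_def by simp
  next
    case True
    have tr: "t * r \<ge> 0" using True t by simp
    have I0: "integrable lborel (\<lambda>v. (indicator {0<..} v * v powr (\<gamma> - 1)) *\<^sub>R (\<lambda>u. \<phi> 0 (t * r + u)) (r * v))"
      by (rule scale_sub(2)) (use True Psi_int[OF g tr cont(1) C0 C2] in auto)
    then have "integrable lborel (\<lambda>v. (1 - r) powr (\<beta> - 1) *\<^sub>R ((indicator {0<..} v * v powr (\<gamma> - 1)) *\<^sub>R (\<lambda>u. \<phi> 0 (t * r + u)) (r * v)))"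
      by (rule Bochner_Integration.integrable_scaleR_right)
    moreover have "P r v = (1 - r) powr (\<beta> - 1) *\<^sub>R ((indicator {0<..} v * v powr (\<gamma> - 1)) *\<^sub>R (\<lambda>u. \<phi> 0 (t * r + u)) (r * v))" for v
      unfolding P_def using True by (simp add: algebra_simps)
    ultimately show ?thesis by (simp only:)
  qed
  have Pint: "integrable (lborel \<Otimes>\<^sub>M lborel) (case_prod P)"
    by (rule lborel_pair.Fubini_integrable[OF Pm]) (use F2 F3 in auto)
  have Fub: "(\<integral>v. (\<integral>r. P r v \<partial>lborel) \<partial>lborel) = (\<integral>r. (\<integral>v. P r v \<partial>lborel) \<partial>lborel)"
    by (rule lborel_pair.Fubini_integral[OF Pint])
  have Gne: "Gamma \<gamma> \<noteq> 0" using Gamma_real_pos[OF g(1)] by simp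
  have F6: "(\<integral>v. P r v \<partial>lborel) = Gamma \<gamma> *\<^sub>R (indicator {0<..<1} r *\<^sub>R (((1 - r) powr (\<beta> - 1) * r powr (-\<gamma> + real 0)) *\<^sub>R Psi \<gamma> \<phi> 0 (t * r)))" for r
  proof (cases "r \<in> {0<..<1}")
    case False
    then show ?thesis unfolding P_def by simp
  next
    case True
    have "P r v = (1 - r) powr (\<beta> - 1) *\<^sub>R ((indicator {0<..} v * v powr (\<gamma> - 1)) *\<^sub>R (\<lambda>u. \<phi> 0 (t * r + u)) (r * v))" for v
      unfolding P_def using True by (simp add: algebra_simps)
    then have "(\<integral>v. P r v \<partial>lborel) = (1 - r) powr (\<beta> - 1) *\<^sub>R (\<integral>v. (indicator {0<..} v * v powr (\<gamma> - 1)) *\<^sub>R (\<lambda>u. \<phi> 0 (t * r + u)) (r * v) \<partial>lborel)"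
      by (simp only: Bochner_Integration.integral_scaleR_right)
    also have "\<dots> = (1 - r) powr (\<beta> - 1) *\<^sub>R (r powr (-\<gamma>) *\<^sub>R (\<integral>u. (indicator {0<..} u * u powr (\<gamma> - 1)) *\<^sub>R \<phi> 0 (t * r + u) \<partial>lborel))"
      using True scale_sub(1)[of r \<gamma> "\<lambda>u. \<phi> 0 (t * r + u)"] by simp
    also have "(\<integral>u. (indicator {0<..} u * u powr (\<gamma> - 1)) *\<^sub>R \<phi> 0 (t * r + u) \<partial>lborel) = Gamma \<gamma> *\<^sub>R Psi \<gamma> \<phi> 0 (t * r)"
      unfolding Psi_def using Gne by simp
    finally show ?thesis using True by (simp add: algebra_simps)
  qed
  have RHS: "(\<integral>r. (\<integral>v. P r v \<partial>lborel) \<partial>lborel) = Gamma \<gamma> *\<^sub>R Phi \<beta> (Psi \<gamma> \<phi>) (-\<gamma>) 0 t"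
    unfolding F6 Phi_def by (simp only: Bochner_Integration.integral_scaleR_right)
  have F7: "(\<integral>r. P r v \<partial>lborel) = (1 / \<beta>) *\<^sub>R ((indicator {0<..} v * v powr (\<gamma> - 1)) *\<^sub>R cesaro \<beta> f (t + v))" for v
  proof (cases "v > 0")
    case False
    then show ?thesis unfolding P_def by simp
  next
    case True
    have "P r v = v powr (\<gamma> - 1) *\<^sub>R (indicator {0<..<1} r *\<^sub>R (((1 - r) powr (\<beta> - 1) * r powr (0 + real 0)) *\<^sub>R \<phi> 0 ((t + v) * r)))" for r
      unfolding P_def using True by (cases "r \<in> {0<..<1}") (auto simp: algebra_simps)
    then have "(\<integral>r. P r v \<partial>lborel) = v powr (\<gamma> - 1) *\<^sub>R Phi \<beta> \<phi> 0 0 (t + v)"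
      unfolding Phi_def by (simp only: Bochner_Integration.integral_scaleR_right)
    also have "Phi \<beta> \<phi> 0 0 (t + v) = (1 / \<beta>) *\<^sub>R cesaro \<beta> f (t + v)"
      using CES[of \<beta> f \<phi> C0 "t + v"] b f0 cont C0 t True by simp
    finally show ?thesis using True by simp
  qed
  have Kint: "integrable lborel (\<lambda>v. (indicator {0<..} v * v powr (\<gamma> - 1)) *\<^sub>R cesaro \<beta> f (t + v))"
  proof -
    have "integrable lborel (\<lambda>v. \<integral>r. P r v \<partial>lborel)" by (rule lborel_pair.integrable_snd[OF Pint])
    then have "integrable lborel (\<lambda>v. \<beta> *\<^sub>R (\<integral>r. P r v \<partial>lborel))" by simp
    then show ?thesis unfolding F7 using b by simp
  qed
  have "weyl_int \<gamma> (cesaro \<beta> f) t = (1 / Gamma \<gamma>) *\<^sub>R (\<integral>v. (indicator {0<..} v * v powr (\<gamma> - 1)) *\<^sub>R cesaro \<beta> f (t + v) \<partial>lborel)"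
    unfolding weyl_int_def weyl_L[OF Kint] ..
  also have "(\<integral>v. (indicator {0<..} v * v powr (\<gamma> - 1)) *\<^sub>R cesaro \<beta> f (t + v) \<partial>lborel) = \<beta> *\<^sub>R (\<integral>v. (\<integral>r. P r v \<partial>lborel) \<partial>lborel)"
    unfolding F7 Bochner_Integration.integral_scaleR_right using b by simp
  finally show ?thesis unfolding Fub RHS using Gne by simp
qed

theorem lemma3p2:
  fixes \<alpha> \<beta> :: real and f :: "real \<Rightarrow> complex"
  assumes "\<alpha> \<ge> 0" and "\<beta> > 0" and "schwartz_plus f"
  shows "\<forall>t>0. D_plus \<alpha> (cesaro \<beta> f) t = cesaro \<beta> (D_plus \<alpha> f) t"
proof (intro allI impI)
  fix t :: real assume t: "t > 0"
  have b: "\<beta> > 0" by fact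
  obtain \<phi> :: "nat \<Rightarrow> real \<Rightarrow> complex" where
   f0: "\<And>x. x \<ge> 0 \<Longrightarrow> f x = \<phi> 0 x" and
   cont: "\<And>k. continuous_on UNIV (\<phi> k)" and
   der: "\<And>k x. x > 0 \<Longrightarrow> (\<phi> k has_vector_derivative \<phi> (Suc k) x) (at x)" and
   b0: "\<And>k. \<exists>C. \<forall>x. norm (\<phi> k x) \<le> C" and
   b2: "\<And>k. \<exists>C. \<forall>x\<ge>0. x ^ 2 * norm (\<phi> k x) \<le> C"
    using schwartz_phi[OF assms(3)] by blast
  show "D_plus \<alpha> (cesaro \<beta> f) t = cesaro \<beta> (D_plus \<alpha> f) t"
  proof (cases "\<alpha> = 0")
    case True
    have "D_plus 0 F = F" for F
      by (auto simp: fun_eq_iff D_plus_def weyl_deriv_def)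
    then show ?thesis using True by simp
  next
    case False
    then have a: "\<alpha> > 0" using assms(1) by simp
    have Dp: "D_plus \<alpha> F x = (x powr \<alpha> / Gamma (\<alpha> + 1)) *\<^sub>R weyl_deriv \<alpha> F x" for F x
      using False by (simp add: D_plus_def)
    show ?thesis
    proof (cases "\<alpha> \<in> \<nat>")
      case True
      then obtain m where m: "\<alpha> = real m" by (auto elim: Nats_cases)
      have wd: "weyl_deriv \<alpha> F x = (-1) ^ m * nth_deriv m F x" for F x
        using True m by (simp add: weyl_deriv_def)
      have bnd: "\<exists>M. \<forall>x>0. norm (\<phi> k x) \<le> M" for k using b0[of k] by blast
      obtain C where C: "\<And>x. norm (\<phi> 0 x) \<le> C" using b0 by blast
      have "(t powr \<alpha> / Gamma (\<alpha> + 1)) *\<^sub>R ((-1) ^ m * nth_deriv m (cesaro \<beta> f) t) =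
         \<beta> *\<^sub>R integral {0..1} (\<lambda>r. (1 - r) powr (\<beta> - 1) *\<^sub>R
            (((t * r) powr \<alpha> / Gamma (\<alpha> + 1)) *\<^sub>R ((-1) ^ m * nth_deriv m f (t * r))))"
      proof (rule final[where h=\<phi> and \<gamma>=0, OF b a _ _ der bnd _ _ t])
        show "0 = real m - \<alpha>" using m by simp
        show "cesaro \<beta> f s = \<beta> *\<^sub>R Phi \<beta> \<phi> (- 0) 0 s" if "s > 0" for s
          using CES[of \<beta> f \<phi> C s] b f0 cont C that by simp
        show "f x = \<phi> 0 x" if "x > 0" for x using f0 that by simp
      qed simp
      then show ?thesis unfolding Dp wd cesaro_def by simp
    next
      case False
      define n where "n = nat \<lfloor>\<alpha>\<rfloor> + 1"
      define \<gamma> where "\<gamma> = real n - \<alpha>"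
      have wd: "weyl_deriv \<alpha> F x = (-1) ^ n * nth_deriv n (weyl_int \<gamma> F) x" for F x
        using False by (simp add: weyl_deriv_def n_def \<gamma>_def Let_def)
      have fl: "real_of_int \<lfloor>\<alpha>\<rfloor> < \<alpha>"
      proof -
        have "real_of_int \<lfloor>\<alpha>\<rfloor> \<noteq> \<alpha>"
        proof
          assume "real_of_int \<lfloor>\<alpha>\<rfloor> = \<alpha>"
          then have "\<alpha> = real (nat \<lfloor>\<alpha>\<rfloor>)" using assms(1) by linarith
          then show False using False by (metis of_nat_in_Nats)
        qed
        then show ?thesis by linarith
      qed
      have g: "0 < \<gamma>" "\<gamma> < 1" unfolding \<gamma>_def n_def using fl assms(1)
        by (simp_all add: of_nat_nat) linarith+
      have P1: "\<And>k x. x > 0 \<Longrightarrow> (Psi \<gamma> \<phi> k has_vector_derivative Psi \<gamma> \<phi> (Suc k) x) (at x)"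
        using Psi_props(1)[of \<gamma> f \<phi>] g f0 cont der b0 b2 by blast
      have P2: "\<And>k. \<exists>M. \<forall>x>0. norm (Psi \<gamma> \<phi> k x) \<le> M"
        using Psi_props(2)[of \<gamma> f \<phi>] g f0 cont der b0 b2 by blast
      have P3: "\<And>x. x > 0 \<Longrightarrow> weyl_int \<gamma> f x = Psi \<gamma> \<phi> 0 x"
        using Psi_props(3)[of \<gamma> f \<phi>] g f0 cont der b0 b2 by blast
      have "(t powr \<alpha> / Gamma (\<alpha> + 1)) *\<^sub>R ((-1) ^ n * nth_deriv n (weyl_int \<gamma> (cesaro \<beta> f)) t) =
         \<beta> *\<^sub>R integral {0..1} (\<lambda>r. (1 - r) powr (\<beta> - 1) *\<^sub>R
            (((t * r) powr \<alpha> / Gamma (\<alpha> + 1)) *\<^sub>R ((-1) ^ n * nth_deriv n (weyl_int \<gamma> f) (t * r))))"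
      proof (rule final[where h="Psi \<gamma> \<phi>" and \<gamma>=\<gamma>, OF b a _ _ P1 P2 _ _ t])
        show "\<gamma> = real n - \<alpha>" by (simp add: \<gamma>_def)
        show "\<gamma> < 1" by (rule g(2))
        show "weyl_int \<gamma> (cesaro \<beta> f) s = \<beta> *\<^sub>R Phi \<beta> (Psi \<gamma> \<phi>) (- \<gamma>) 0 s" if "s > 0" for s
          by (rule W3[OF g b f0 cont der b0 b2 that])
        show "weyl_int \<gamma> f x = Psi \<gamma> \<phi> 0 x" if "x > 0" for x by (rule P3[OF that])
      qed
      then show ?thesis unfolding Dp wd cesaro_def by simp
    qed
  qed
qed

end
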